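(* Let lines in the real projective plane be in bounded general position, with associated graph $G$. Let $V$ be a convex $m$-polygon whose vertices are vertices of $G$ and whose sides lie on distinct lines of the arrangement, suppose $V$ is not an alcove and has vertex number $k>0$, and suppose an edge $e$ of $G$ forms one side of $V$. Then $e$ forms one side of a convex polygon $W$ with at most $m+1$ sides, whose vertices are vertices of $G$ and whose sides lie on distinct lines of the arrangement, having vertex number $r$ with $0\leq r<k$.
   Context: Lines in $\mathbb{R}P^2$ are in general position if no three pass through a common point, and in bounded position if all pairwise intersections lie in $\mathbb{R}^2$. The graph $G$ has as vertices the pairwise intersection points of the lines; two vertices are joined by an edge if some line of the arrangement contains both and no third vertex lies between them on that line; the edge is the closed segment joining them. An alcove is a subset $V\subset\mathbb{R}^2$ which is compact, convex and connected, whose boundary is a union of edges of $G$ belonging to distinct lines, and which contains no proper subset with these two properties. For a convex polygon $V$ whose vertices are vertices of $G$ lying on distinct lines, its vertex number is the number of vertices of $G$ lying either in the interior of $V$ or in the interior of one of the line segments forming the boundary of $V$. *)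

theory Defs
  imports "HOL-Analysis.Analysis"
begin

text \<open>Lines of an arrangement in bounded position are modelled as affine lines of the
  real plane (all pairwise intersections are finite, so the line at infinity is excluded
  and no two lines are parallel).\<close>

definition is_line :: "(real^2) set \<Rightarrow> bool" where
  "is_line L \<longleftrightarrow> (\<exists>a b. a \<noteq> 0 \<and> L = {x. a \<bullet> x = b})"

definition bounded_general_position :: "(real^2) set set \<Rightarrow> bool" where
  "bounded_general_position \<L> \<longleftrightarrow>
     finite \<L> \<and> (\<forall>L\<in>\<L>. is_line L) \<and>
     (\<forall>L1\<in>\<L>. \<forall>L2\<in>\<L>. L1 \<noteq> L2 \<longrightarrow> L1 \<inter> L2 \<noteq> {}) \<and>
     (\<forall>L1\<in>\<L>. \<forall>L2\<in>\<L>. \<forall>L3\<in>\<L>. L1 \<noteq> L2 \<and> L1 \<noteq> L3 \<and> L2 \<noteq> L3 \<longrightarrow> L1 \<inter> L2 \<inter> L3 = {})"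

definition G_vertices :: "(real^2) set set \<Rightarrow> (real^2) set" where
  "G_vertices \<L> = {p. \<exists>L1\<in>\<L>. \<exists>L2\<in>\<L>. L1 \<noteq> L2 \<and> p \<in> L1 \<and> p \<in> L2}"

definition G_edges :: "(real^2) set set \<Rightarrow> (real^2) set set" where
  "G_edges \<L> = {closed_segment p q | p q.
       p \<in> G_vertices \<L> \<and> q \<in> G_vertices \<L> \<and> p \<noteq> q \<and>
       (\<exists>L\<in>\<L>. p \<in> L \<and> q \<in> L) \<and>
       G_vertices \<L> \<inter> open_segment p q = {}}"

definition polygon_sides :: "(real^2) set \<Rightarrow> (real^2) set set" where
  "polygon_sides V = {F. F face_of V \<and> aff_dim F = 1}"

definition polygon_vertices :: "(real^2) set \<Rightarrow> (real^2) set" where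
  "polygon_vertices V = {x. {x} face_of V}"

definition arr_polygon :: "(real^2) set set \<Rightarrow> (real^2) set \<Rightarrow> bool" where
  "arr_polygon \<L> V \<longleftrightarrow>
     polytope V \<and> aff_dim V = 2 \<and>
     polygon_vertices V \<subseteq> G_vertices \<L> \<and>
     (\<exists>lf. inj_on lf (polygon_sides V) \<and>
          (\<forall>F\<in>polygon_sides V. lf F \<in> \<L> \<and> F \<subseteq> lf F))"

definition vertex_number :: "(real^2) set set \<Rightarrow> (real^2) set \<Rightarrow> nat" where
  "vertex_number \<L> V = card {p \<in> G_vertices \<L>.
       p \<in> interior V \<or> (\<exists>F\<in>polygon_sides V. p \<in> rel_interior F)}"

text \<open>The two properties in the definition of an alcove (nondegeneracy: nonempty interior).\<close>
definition alcove_candidate :: "(real^2) set set \<Rightarrow> (real^2) set \<Rightarrow> bool" where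
  "alcove_candidate \<L> V \<longleftrightarrow>
     compact V \<and> convex V \<and> connected V \<and> interior V \<noteq> {} \<and>
     (\<exists>E. E \<subseteq> G_edges \<L> \<and> frontier V = \<Union>E \<and>
          (\<exists>lf. inj_on lf E \<and> (\<forall>e\<in>E. lf e \<in> \<L> \<and> e \<subseteq> lf e)))"

definition alcove :: "(real^2) set set \<Rightarrow> (real^2) set \<Rightarrow> bool" where
  "alcove \<L> V \<longleftrightarrow> alcove_candidate \<L> V \<and> \<not> (\<exists>U. U \<subset> V \<and> alcove_candidate \<L> U)"

end

theory Submission
  imports Defs
begin


lemma line_props:
  assumes "is_line L"
  shows "affine L" "aff_dim L = 1" "L \<noteq> {}"
proof -
  obtain a b where ab: "a \<noteq> 0" "L = {x. a \<bullet> x = b}" using assms is_line_def by blast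
  show "affine L" using ab by (simp add: affine_hyperplane)
  show d: "aff_dim L = 1" using ab by simp
  show "L \<noteq> {}" using d by auto
qed

lemma hyp_is_line: "a \<noteq> 0 \<Longrightarrow> is_line {x. a \<bullet> x = b}"
  unfolding is_line_def by blast

lemma line_hull:
  assumes "is_line L" "F \<subseteq> L" "aff_dim F = 1"
  shows "affine hull F = L"
proof (rule affine_dim_equal)
  show "affine (affine hull F)" by simp
  show "affine L" using line_props(1)[OF assms(1)] .
  show "affine hull F \<noteq> {}" using assms(3) by auto
  show "affine hull F \<subseteq> L" using assms line_props(1)[OF assms(1)] by (simp add: hull_minimal)
  show "aff_dim (affine hull F) = aff_dim L" using assms line_props(2)[OF assms(1)] by simp
qed

lemma two_lines:
  assumes "is_line L1" "is_line L2" "L1 \<noteq> L2" "x \<in> L1" "x \<in> L2" "y \<in> L1" "y \<in> L2"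
  shows "x = y"
proof (rule ccontr)
  assume "x \<noteq> y"
  then have "aff_dim {x,y} = 1" by simp
  then have "affine hull {x,y} = L1" "affine hull {x,y} = L2"
    using line_hull[of L1 "{x,y}"] line_hull[of L2 "{x,y}"] assms by auto
  then show False using assms(3) by simp
qed

lemma aff_dim1_two_points:
  fixes F :: "(real^2) set"
  assumes "aff_dim F = 1"
  obtains x y where "x \<in> F" "y \<in> F" "x \<noteq> y"
proof -
  have "F \<noteq> {}" using assms by auto
  moreover have "\<not> (\<exists>a. F = {a})" using assms aff_dim_eq_0 by fastforce
  ultimately show ?thesis using that by blast
qed

lemma lin_max:
  fixes G :: "(real^2) set"
  assumes "convex G" "G \<subseteq> {x. a \<bullet> x \<le> b}" "x \<in> rel_interior G" "a \<bullet> x = b"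
  shows "G \<subseteq> {x. a \<bullet> x = b}"
proof -
  have "(G \<inter> {x. a \<bullet> x = b}) face_of G"
    using assms by (intro face_of_Int_supporting_hyperplane_le) auto
  moreover have "(G \<inter> {x. a \<bullet> x = b}) \<inter> rel_interior G \<noteq> {}"
    using assms rel_interior_subset by fastforce
  ultimately have "G \<subseteq> G \<inter> {x. a \<bullet> x = b}" using subset_of_face_of by blast
  then show ?thesis by blast
qed

lemma side_eq:
  fixes W G :: "(real^2) set"
  assumes "convex W" "G face_of W" "aff_dim G = 1" "W \<subseteq> {x. a \<bullet> x \<le> b}" "a \<noteq> 0"
    "x \<in> rel_interior G" "a \<bullet> x = b"
  shows "G = W \<inter> {x. a \<bullet> x = b}"
proof -
  have GW: "G \<subseteq> W" using assms face_of_imp_subset by blast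
  have "G \<subseteq> {x. a \<bullet> x = b}"
    using lin_max[of G a b x] assms GW face_of_imp_convex by blast
  then have sub: "G \<subseteq> W \<inter> {x. a \<bullet> x = b}" using GW by blast
  have f: "G face_of (W \<inter> {x. a \<bullet> x = b})" using face_of_subset[OF assms(2) sub] by blast
  show ?thesis
  proof (rule ccontr)
    assume ne: "G \<noteq> W \<inter> {x. a \<bullet> x = b}"
    have "aff_dim G < aff_dim (W \<inter> {x. a \<bullet> x = b})"
      using face_of_aff_dim_lt[OF _ f ne] assms(1) by (simp add: convex_Int convex_hyperplane)
    also have "\<dots> \<le> aff_dim {x. a \<bullet> x = b}" by (intro aff_dim_subset) blast
    also have "\<dots> = 1" using assms(5) by simp
    finally show False using assms(3) by simp
  qed
qed

lemma sides_facets: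
  fixes S :: "(real^2) set"
  assumes "aff_dim S = 2"
  shows "F \<in> polygon_sides S \<longleftrightarrow> F facet_of S"
  using assms unfolding polygon_sides_def facet_of_def by auto

lemma corner:
  fixes S :: "(real^2) set"
  assumes "polyhedron S" "aff_dim S = 2" "{x} face_of S" "F facet_of S" "x \<in> F"
  obtains F' where "F' facet_of S" "F' \<noteq> F" "x \<in> F'"
proof -
  have ne: "{x} \<noteq> S" using assms(2) by auto
  have eq: "{x} = \<Inter>{G. G facet_of S \<and> {x} \<subseteq> G}"
    using face_of_polyhedron[OF assms(1) assms(3) _ ne] by blast
  show ?thesis
  proof (cases "\<exists>F'. F' facet_of S \<and> F' \<noteq> F \<and> x \<in> F'")
    case True then show ?thesis using that by blast
  next
    case False
    then have "{G. G facet_of S \<and> {x} \<subseteq> G} = {F}" using assms(4,5) by auto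
    then have "{x} = F" using eq by simp
    then have "aff_dim F = 0" using aff_dim_eq_0 by blast
    moreover have "aff_dim F = 1" using assms(2,4) by (simp add: facet_of_def)
    ultimately show ?thesis by simp
  qed
qed

lemma half_side:
  fixes S :: "(real^2) set"
  assumes "connected S" "is_line l" "S \<inter> l = {}"
  obtains a b where "a \<noteq> 0" "l = {x. a \<bullet> x = b}" "\<forall>x\<in>S. a \<bullet> x < b"
proof -
  obtain u c where uc: "u \<noteq> 0" "l = {x. u \<bullet> x = c}" using assms(2) is_line_def by blast
  show ?thesis
  proof (cases "\<exists>y\<in>S. u \<bullet> y > c")
    case True
    then obtain y where y: "y \<in> S" "u \<bullet> y > c" by blast
    have "\<forall>x\<in>S. u \<bullet> x > c"
    proof (rule ccontr)
      assume "\<not> (\<forall>x\<in>S. u \<bullet> x > c)"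
      then obtain x where "x \<in> S" "u \<bullet> x \<le> c" by force
      then obtain z where "z \<in> S" "u \<bullet> z = c"
        using connected_ivt_hyperplane[OF assms(1), of x y u c] y by force
      then show False using assms(3) uc by blast
    qed
    moreover have "l = {x. (-u) \<bullet> x = -c}" using uc by auto
    ultimately show ?thesis using that[of "-u" "-c"] uc by auto
  next
    case False
    then have "\<forall>x\<in>S. u \<bullet> x < c" using assms(3) uc by force
    then show ?thesis using that uc by blast
  qed
qed


lemma sideV:
  fixes S F L :: "(real^2) set"
  assumes "polyhedron S" "aff_dim S = 2" "F facet_of S" "is_line L" "F \<subseteq> L"
  obtains a b where "a \<noteq> 0" "S \<subseteq> {x. a \<bullet> x \<le> b}" "L = {x. a \<bullet> x = b}"
    "F = S \<inter> L" "L \<inter> interior S = {}"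
proof -
  obtain a b where ab: "a \<noteq> 0" "S \<subseteq> {x. a \<bullet> x \<le> b}" "F = S \<inter> {x. a \<bullet> x = b}"
    using facet_of_polyhedron[OF assms(1,3)] by blast
  have d: "aff_dim F = 1" using assms(2,3) by (simp add: facet_of_def)
  have "affine hull F = {x. a \<bullet> x = b}"
    using line_hull[OF hyp_is_line[OF ab(1)] _ d] ab(3) by blast
  moreover have "affine hull F = L" using line_hull[OF assms(4,5) d] .
  ultimately have L: "L = {x. a \<bullet> x = b}" by simp
  have "interior S \<subseteq> {x. a \<bullet> x < b}"
    using interior_mono[OF ab(2)] ab(1) by simp
  then have LI: "L \<inter> interior S = {}" using L by auto
  have FL: "F = S \<inter> L" using ab(3) L by simp
  show ?thesis by (rule that[OF ab(1,2) L FL LI])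
qed


lemma bgp_parts:
  assumes "bounded_general_position \<L>"
  shows "finite \<L>" "\<forall>L\<in>\<L>. is_line L"
   "\<forall>L1\<in>\<L>. \<forall>L2\<in>\<L>. \<forall>L3\<in>\<L>. L1 \<noteq> L2 \<and> L1 \<noteq> L3 \<and> L2 \<noteq> L3 \<longrightarrow> L1 \<inter> L2 \<inter> L3 = {}"
  using assms unfolding bounded_general_position_def by simp_all

lemma bgp_lines: "bounded_general_position \<L> \<Longrightarrow> L \<in> \<L> \<Longrightarrow> is_line L"
  using bgp_parts(2) by blast

lemma triple:
  assumes "bounded_general_position \<L>" "L1 \<in> \<L>" "L2 \<in> \<L>" "L3 \<in> \<L>"
    "L1 \<noteq> L2" "L1 \<noteq> L3" "L2 \<noteq> L3" "x \<in> L1" "x \<in> L2" "x \<in> L3"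
  shows False
proof -
  have "L1 \<inter> L2 \<inter> L3 = {}" using bgp_parts(3)[OF assms(1)] assms(2-7) by blast
  then show False using assms(8-10) by blast
qed

lemma finite_Gv:
  assumes "bounded_general_position \<L>"
  shows "finite (G_vertices \<L>)"
proof -
  let ?P = "{(L1,L2). L1 \<in> \<L> \<and> L2 \<in> \<L> \<and> L1 \<noteq> L2}"
  have fL: "finite \<L>" using bgp_parts(1)[OF assms] .
  have fP: "finite ?P" by (rule finite_subset[of _ "\<L> \<times> \<L>"]) (use fL in auto)
  have eq: "G_vertices \<L> = \<Union>((\<lambda>(L1,L2). L1 \<inter> L2) ` ?P)"
    unfolding G_vertices_def by auto
  have "finite (L1 \<inter> L2)" if "(L1,L2) \<in> ?P" for L1 L2
  proof -
    have ll: "is_line L1" "is_line L2" "L1 \<noteq> L2" using that bgp_lines[OF assms] by auto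
    show ?thesis
    proof (cases "L1 \<inter> L2 = {}")
      case True then show ?thesis by simp
    next
      case False
      then obtain x where x: "x \<in> L1 \<inter> L2" by blast
      have "L1 \<inter> L2 \<subseteq> {x}" using two_lines[OF ll] x by blast
      then show ?thesis using finite_subset by blast
    qed
  qed
  then show ?thesis unfolding eq using fP by (intro finite_Union finite_imageI) auto
qed



theorem lemma1p8:
  fixes \<L> :: "(real^2) set set" and V e :: "(real^2) set" and m k :: nat
  assumes "bounded_general_position \<L>"
    and "arr_polygon \<L> V"
    and "card (polygon_sides V) = m"
    and "\<not> alcove \<L> V"
    and "vertex_number \<L> V = k" and "k > 0"
    and "e \<in> G_edges \<L>" and "e \<in> polygon_sides V"
  shows "\<exists>W. arr_polygon \<L> W \<and> card (polygon_sides W) \<le> m + 1 \<and>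
             e \<in> polygon_sides W \<and> vertex_number \<L> W < k"
proof -
  note bgp = assms(1)
  have lines: "\<And>L. L \<in> \<L> \<Longrightarrow> is_line L" using bgp_lines[OF bgp] .
  from assms(2) obtain lf where polV: "polytope V" and dV: "aff_dim V = 2"
    and vV: "polygon_vertices V \<subseteq> G_vertices \<L>"
    and inj: "inj_on lf (polygon_sides V)"
    and lfp: "\<forall>F\<in>polygon_sides V. lf F \<in> \<L> \<and> F \<subseteq> lf F"
    unfolding arr_polygon_def by blast
  have phV: "polyhedron V" using polV polytope_imp_polyhedron by blast
  have cvV: "convex V" using polV polytope_imp_convex by blast
  have clV: "closed V" using polV polytope_imp_compact compact_imp_closed by blast
  have bdV: "bounded V" using polV polytope_imp_bounded by blast
  have "V \<noteq> {}" using dV by auto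
  then have "rel_interior V \<noteq> {}" using rel_interior_eq_empty[OF cvV] by simp
  then have intV: "interior V \<noteq> {}" using interior_rel_interior_gen[of V] dV by simp
  have sidesV: "\<And>F. F \<in> polygon_sides V \<longleftrightarrow> F facet_of V" using sides_facets[OF dV] .
  have d1: "\<And>F X. F \<in> polygon_sides X \<Longrightarrow> aff_dim F = 1" by (simp add: polygon_sides_def)
  have fc: "\<And>F X. F \<in> polygon_sides X \<Longrightarrow> F face_of X" by (simp add: polygon_sides_def)
  have lfL: "\<And>F. F \<in> polygon_sides V \<Longrightarrow> lf F \<in> \<L>" and Flf: "\<And>F. F \<in> polygon_sides V \<Longrightarrow> F \<subseteq> lf F"
    using lfp by auto
  have sV: "\<exists>a b. a \<noteq> 0 \<and> V \<subseteq> {x. a \<bullet> x \<le> b} \<and> lf F = {x. a \<bullet> x = b} \<and>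
      F = V \<inter> lf F \<and> lf F \<inter> interior V = {}" if F: "F \<in> polygon_sides V" for F
  proof -
    obtain a b where "a \<noteq> 0" "V \<subseteq> {x. a \<bullet> x \<le> b}" "lf F = {x. a \<bullet> x = b}"
      "F = V \<inter> lf F" "lf F \<inter> interior V = {}"
      using sideV[OF phV dV sidesV[THEN iffD1, OF F] lines[OF lfL[OF F]] Flf[OF F]] by blast
    then show ?thesis by blast
  qed
  have lfint: "\<And>F. F \<in> polygon_sides V \<Longrightarrow> lf F \<inter> interior V = {}" using sV by blast
  have FV: "\<And>F. F \<in> polygon_sides V \<Longrightarrow> F = V \<inter> lf F" using sV by blast
  define C where "C X = {p \<in> G_vertices \<L>. p \<in> interior X \<or> (\<exists>F\<in>polygon_sides X. p \<in> rel_interior F)}" for X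
  have vn: "vertex_number \<L> X = card (C X)" for X by (simp add: vertex_number_def C_def)
  have finGv: "finite (G_vertices \<L>)" using finite_Gv[OF bgp] .
  have finC: "finite (C V)" by (rule finite_subset[OF _ finGv]) (auto simp: C_def)
  have "C V \<noteq> {}" using assms(5,6) vn by (metis card.empty less_irrefl)
  then obtain p where p: "p \<in> C V" by blast
  have inGv: "x \<in> G_vertices \<L>" if "L1 \<in> \<L>" "L2 \<in> \<L>" "L1 \<noteq> L2" "x \<in> L1" "x \<in> L2" for L1 L2 x
    using that unfolding G_vertices_def by blast
  obtain l where l: "l \<in> \<L>" "l \<inter> interior V \<noteq> {}"
  proof -
    from p obtain L1 L2 where L12: "L1 \<in> \<L>" "L2 \<in> \<L>" "L1 \<noteq> L2" "p \<in> L1" "p \<in> L2"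
      unfolding C_def G_vertices_def by blast
    from p consider "p \<in> interior V" | F where "F \<in> polygon_sides V" "p \<in> rel_interior F"
      unfolding C_def by blast
    then show ?thesis
    proof cases
      case 1 then show ?thesis using that[OF L12(1)] L12(4) by blast
    next
      case 2
      note F = 2
      obtain l where ll: "l \<in> \<L>" "p \<in> l" "l \<noteq> lf F"
        using L12 by metis
      have "l \<inter> interior V \<noteq> {}"
      proof
        assume dis: "l \<inter> interior V = {}"
        have "connected (interior V)" by (simp add: cvV convex_connected)
        then obtain a b where ab: "a \<noteq> 0" "l = {x. a \<bullet> x = b}" "\<forall>x\<in>interior V. a \<bullet> x < b"
          using half_side[of "interior V" l] lines[OF ll(1)] dis by blast
        have "closure (interior V) \<subseteq> {x. a \<bullet> x \<le> b}"
          by (rule closure_minimal) (use ab(3) closed_halfspace_le in auto)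
        then have Vle: "V \<subseteq> {x. a \<bullet> x \<le> b}"
          using convex_closure_interior[OF cvV intV] closure_closed[OF clV] by simp
        have cF: "convex F" using fc[OF F(1)] face_of_imp_convex by blast
        have FVs: "F \<subseteq> V" using fc[OF F(1)] face_of_imp_subset by blast
        have "F \<subseteq> l" using lin_max[OF cF _ F(2), of a b] Vle FVs ab(2) ll(2) by blast
        moreover obtain x y where "x \<in> F" "y \<in> F" "x \<noteq> y" using aff_dim1_two_points[OF d1[OF F(1)]] by blast
        ultimately show False
          using two_lines[OF lines[OF ll(1)] lines[OF lfL[OF F(1)]] ll(3), of x y] Flf[OF F(1)] by blast
      qed
      then show ?thesis using that ll(1) by blast
    qed
  qed
  obtain z where z: "z \<in> l" "z \<in> interior V" using l(2) by blast
  have lnot: "\<And>F. F \<in> polygon_sides V \<Longrightarrow> lf F \<noteq> l" using lfint z by blast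
  have isl: "is_line l" using lines[OF l(1)] .
  have affl: "affine l" using line_props(1)[OF isl] .
  from assms(7) obtain a0 b0 where e: "e = closed_segment a0 b0"
    and nov: "G_vertices \<L> \<inter> open_segment a0 b0 = {}"
    unfolding G_edges_def by blast
  have eF: "e facet_of V" using sidesV assms(8) by blast
  have eV: "e \<subseteq> V" using fc[OF assms(8)] face_of_imp_subset by blast
  have el: "e \<inter> l = {}"
  proof (rule ccontr)
    assume "e \<inter> l \<noteq> {}"
    then obtain x where x: "x \<in> e" "x \<in> l" by blast
    have xG: "x \<in> G_vertices \<L>"
      using inGv[OF lfL[OF assms(8)] l(1) lnot[OF assms(8)] _ x(2)] Flf[OF assms(8)] x(1) by blast
    then have "x = a0 \<or> x = b0" using nov x(1) e unfolding open_segment_def by blast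
    then have "{x} face_of e" using e by (simp add: face_of_singleton extreme_point_of_segment)
    then have xV: "{x} face_of V" using fc[OF assms(8)] face_of_trans by blast
    obtain F' where F': "F' facet_of V" "F' \<noteq> e" "x \<in> F'" using corner[OF phV dV xV eF x(1)] by blast
    have F's: "F' \<in> polygon_sides V" using sidesV F'(1) by blast
    have "lf F' \<noteq> lf e" using inj F'(2) F's assms(8) by (meson inj_on_contraD)
    then show False
      using triple[OF bgp lfL[OF F's] lfL[OF assms(8)] l(1) _ lnot[OF F's] lnot[OF assms(8)], of x]
        Flf[OF F's] Flf[OF assms(8)] F'(3) x by blast
  qed
  have "connected e" using e by (simp add: convex_connected)
  then obtain u c where uc: "u \<noteq> 0" "l = {x. u \<bullet> x = c}" "\<forall>x\<in>e. u \<bullet> x < c"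
    using half_side[of e l] isl el by blast
  define W where "W = V \<inter> {x. u \<bullet> x \<le> c}"
  have WV: "W \<subseteq> V" unfolding W_def by blast
  have Whs: "W \<subseteq> {x. u \<bullet> x \<le> c}" unfolding W_def by blast
  have Wl: "W \<inter> l = V \<inter> l" unfolding W_def uc(2) by auto
  have polW: "polytope W" unfolding W_def by (rule polytope_Int_polyhedron[OF polV polyhedron_halfspace_le])
  have phW: "polyhedron W" using polW polytope_imp_polyhedron by blast
  have cvW: "convex W" using polW polytope_imp_convex by blast
  have intW: "interior W = interior V \<inter> {x. u \<bullet> x < c}" unfolding W_def using uc(1) by simp
  have a0e: "a0 \<in> e" using e by simp
  have ua0: "u \<bullet> a0 < c" using uc(3) a0e by blast
  have uz: "u \<bullet> z = c" using z(1) uc(2) by blast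
  have "z \<noteq> a0" using ua0 uz by auto
  then have "midpoint z a0 \<in> interior V"
    using in_interior_closure_convex_segment[OF cvV z(2), of a0] eV a0e closure_closed[OF clV]
      midpoint_in_open_segment by blast
  moreover have "u \<bullet> midpoint z a0 < c"
    using ua0 uz by (simp add: midpoint_def inner_add_right)
  ultimately have intWne: "interior W \<noteq> {}" using intW by blast
  have dW: "aff_dim W = 2" using aff_dim_nonempty_interior[OF intWne] by simp
  have sidesW: "\<And>G. G \<in> polygon_sides W \<longleftrightarrow> G facet_of W" using sides_facets[OF dW] .
  have riVl: "rel_interior (V \<inter> l) = interior V \<inter> l"
    using rel_interior_convex_Int_affine[OF cvV affl] z by blast
  have sW: "G = W \<inter> l \<or> (\<exists>F\<in>polygon_sides V. G = W \<inter> lf F)" if G: "G \<in> polygon_sides W" for G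
  proof -
    have Gf: "G face_of W" and Gd: "aff_dim G = 1" using G by (auto simp: polygon_sides_def)
    have cG: "convex G" using Gf face_of_imp_convex by blast
    have "G \<noteq> {}" using Gd by auto
    then obtain x where x: "x \<in> rel_interior G" using rel_interior_eq_empty[OF cG] by blast
    have xG: "x \<in> G" using x rel_interior_subset by blast
    have "G \<noteq> W" using Gd dW by auto
    then have "G \<subseteq> rel_frontier W" using face_of_subset_rel_frontier[OF Gf] by blast
    then have xnW: "x \<notin> interior W" using xG rel_frontier_nonempty_interior[OF intWne]
      unfolding frontier_def by blast
    have xW: "x \<in> W" using xG Gf face_of_imp_subset by blast
    show ?thesis
    proof (cases "u \<bullet> x = c")
      case True
      have "G = W \<inter> {x. u \<bullet> x = c}" using side_eq[OF cvW Gf Gd Whs uc(1) x True] .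
      then show ?thesis using uc(2) by (intro disjI1) simp
    next
      case False
      then have "u \<bullet> x < c" using xW Whs by force
      then have "x \<notin> interior V" using xnW intW by blast
      then have "x \<in> frontier V" using xW WV closure_closed[OF clV] unfolding frontier_def by blast
      then have "x \<in> \<Union>{F. F facet_of V}"
        using rel_frontier_nonempty_interior[OF intV] rel_frontier_of_polyhedron[OF phV] by simp
      then obtain F where F: "F facet_of V" "x \<in> F" by blast
      have Fs: "F \<in> polygon_sides V" using sidesV F(1) by blast
      obtain a b where ab: "a \<noteq> 0" "V \<subseteq> {x. a \<bullet> x \<le> b}" "lf F = {x. a \<bullet> x = b}"
        using sV[OF Fs] by blast
      have "a \<bullet> x = b" using Flf[OF Fs] F(2) ab(3) by blast
      moreover have "W \<subseteq> {x. a \<bullet> x \<le> b}" using ab(2) WV by blast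
      ultimately have "G = W \<inter> {x. a \<bullet> x = b}" using side_eq[OF cvW Gf Gd _ ab(1) x] by blast
      then have "G = W \<inter> lf F" using ab(3) by simp
      then show ?thesis using Fs by (intro disjI2 bexI[of _ F])
    qed
  qed
  have sWl: "\<exists>M\<in>\<L>. G = W \<inter> M" if "G \<in> polygon_sides W" for G
    using sW[OF that] l(1) lfL by blast
  have hullW: "affine hull G \<in> \<L> \<and> G = W \<inter> affine hull G" if G: "G \<in> polygon_sides W" for G
  proof -
    obtain M where M: "M \<in> \<L>" "G = W \<inter> M" using sWl[OF G] by blast
    have "affine hull G = M" using line_hull[OF lines[OF M(1)] _ d1[OF G]] M(2) by blast
    then show ?thesis using M by simp
  qed
  have injW: "inj_on (\<lambda>G. affine hull G) (polygon_sides W)"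
    by (rule inj_onI) (metis hullW)
  have finV: "finite (polygon_sides V)"
    by (rule finite_subset[OF _ finite_polytope_faces[OF polV]]) (auto simp: polygon_sides_def)
  have "polygon_sides W \<subseteq> insert (W \<inter> l) ((\<lambda>F. W \<inter> lf F) ` polygon_sides V)"
    using sW by blast
  then have "card (polygon_sides W) \<le> card (insert (W \<inter> l) ((\<lambda>F. W \<inter> lf F) ` polygon_sides V))"
    by (intro card_mono) (use finV in auto)
  also have "\<dots> \<le> Suc (card ((\<lambda>F. W \<inter> lf F) ` polygon_sides V))"
    by (simp add: card_insert_if finV)
  also have "\<dots> \<le> Suc m" using card_image_le[OF finV, of "\<lambda>F. W \<inter> lf F"] assms(3) by simp
  finally have cardW: "card (polygon_sides W) \<le> m + 1" by simp
  have vW: "polygon_vertices W \<subseteq> G_vertices \<L>"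
  proof
    fix x assume "x \<in> polygon_vertices W"
    then have xf: "{x} face_of W" by (simp add: polygon_vertices_def)
    have "{x} \<noteq> W" using dW by auto
    then obtain G1 where G1: "G1 facet_of W" "{x} \<subseteq> G1"
      using face_of_polyhedron_subset_facet[OF phW xf] by blast
    obtain G2 where G2: "G2 facet_of W" "G2 \<noteq> G1" "x \<in> G2"
      using corner[OF phW dW xf G1(1)] G1(2) by blast
    have s1: "G1 \<in> polygon_sides W" and s2: "G2 \<in> polygon_sides W" using sidesW G1 G2 by auto
    have "affine hull G1 \<noteq> affine hull G2" using injW s1 s2 G2(2) by (metis inj_onD)
    then show "x \<in> G_vertices \<L>"
      using inGv[of "affine hull G1" "affine hull G2" x] hullW[OF s1] hullW[OF s2]
        G1(2) G2(3) hull_subset by blast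
  qed
  have arrW: "arr_polygon \<L> W"
    unfolding arr_polygon_def
    using polW dW vW injW hullW hull_subset by blast
  have eW: "e \<subseteq> W" using eV uc(3) unfolding W_def by fastforce
  have "e face_of W" using face_of_subset[OF fc[OF assms(8)] eW WV] .
  then have eSW: "e \<in> polygon_sides W" using d1[OF assms(8)] by (simp add: polygon_sides_def)
  have "\<not> bounded l"
  proof
    assume "bounded l"
    then have "l = {} \<or> (\<exists>a. l = {a})" using affine_bounded_eq_trivial[OF affl] by blast
    then show False using line_props(2,3)[OF isl] aff_dim_eq_0[of l] by auto
  qed
  then have "l - V \<noteq> {}" using bdV bounded_subset by blast
  moreover have "connected l" using affl affine_imp_convex convex_connected by blast
  moreover have "l \<inter> V \<noteq> {}" using z interior_subset by blast
  ultimately have "l \<inter> frontier V \<noteq> {}" using connected_Int_frontier by blast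
  then obtain q where q: "q \<in> l" "q \<in> frontier V" by blast
  have qnI: "q \<notin> interior V" using q(2) unfolding frontier_def by blast
  have "q \<in> \<Union>{F. F facet_of V}"
    using q(2) rel_frontier_nonempty_interior[OF intV] rel_frontier_of_polyhedron[OF phV] by simp
  then obtain F0 where F0: "F0 facet_of V" "q \<in> F0" by blast
  have F0s: "F0 \<in> polygon_sides V" using sidesV F0(1) by blast
  have qG: "q \<in> G_vertices \<L>"
    using inGv[OF lfL[OF F0s] l(1) lnot[OF F0s] _ q(1)] Flf[OF F0s] F0(2) by blast
  have qri: "q \<in> rel_interior F0"
  proof (rule ccontr)
    assume nri: "q \<notin> rel_interior F0"
    have F0f: "F0 face_of V" using F0(1) facet_of_def by blast
    have polF0: "polytope F0" using face_of_polytope_polytope[OF polV F0f] .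
    have "closed F0" using polF0 polytope_imp_compact compact_imp_closed by blast
    then have "q \<in> rel_frontier F0" using nri F0(2) closure_closed unfolding rel_frontier_def by blast
    then have "q \<in> \<Union>{T. T facet_of F0}"
      using rel_frontier_of_polyhedron[OF polytope_imp_polyhedron[OF polF0]] by simp
    then obtain T where T: "T facet_of F0" "q \<in> T" by blast
    have "aff_dim T = 0" using T(1) d1[OF F0s] by (simp add: facet_of_def)
    then obtain t where "T = {t}" using aff_dim_eq_0 by blast
    then have "T = {q}" using T(2) by blast
    then have "{q} face_of V" using T(1) F0f face_of_trans facet_of_def by metis
    then obtain F' where F': "F' facet_of V" "F' \<noteq> F0" "q \<in> F'"
      using corner[OF phV dV _ F0] by blast
    have F's: "F' \<in> polygon_sides V" using sidesV F'(1) by blast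
    have "lf F' \<noteq> lf F0" using inj F'(2) F's F0s by (meson inj_on_contraD)
    then show False
      using triple[OF bgp lfL[OF F's] lfL[OF F0s] l(1) _ lnot[OF F's] lnot[OF F0s], of q]
        Flf[OF F's] Flf[OF F0s] F'(3) F0(2) q(1) by blast
  qed
  have qC: "q \<in> C V" using qG qri F0s unfolding C_def by blast
  have sideWl: "rel_interior (W \<inter> l) = interior V \<inter> l" using Wl riVl by simp
  have CW: "C W \<subseteq> C V - {q}"
  proof
    fix y assume y: "y \<in> C W"
    then have yG: "y \<in> G_vertices \<L>" unfolding C_def by blast
    from y consider "y \<in> interior W" | G where "G \<in> polygon_sides W" "y \<in> rel_interior G"
      unfolding C_def by blast
    then show "y \<in> C V - {q}"
    proof cases
      case 1
      then have "y \<in> interior V" using interior_mono[OF WV] by blast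
      then show ?thesis using yG qnI unfolding C_def by blast
    next
      case 2
      note G = 2
      have yq: "y \<noteq> q"
      proof
        assume "y = q"
        then have "G = W \<inter> {x. u \<bullet> x = c}"
          using side_eq[OF cvW fc[OF G(1)] d1[OF G(1)] Whs uc(1) G(2)] q(1) uc(2) by blast
        then have "y \<in> interior V" using G(2) sideWl uc(2) by simp
        then show False using qnI \<open>y = q\<close> by blast
      qed
      from sW[OF G(1)] show ?thesis
      proof
        assume "G = W \<inter> l"
        then have "y \<in> interior V" using G(2) sideWl by simp
        then show ?thesis using yG yq unfolding C_def by blast
      next
        assume "\<exists>F\<in>polygon_sides V. G = W \<inter> lf F"
        then obtain F where F: "F \<in> polygon_sides V" "G = W \<inter> lf F" by blast
        have GF: "G \<subseteq> F" using F(2) FV[OF F(1)] WV by blast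
        have h1: "affine hull G = lf F"
          using line_hull[OF lines[OF lfL[OF F(1)]] _ d1[OF G(1)]] F(2) by blast
        have h2: "affine hull F = lf F"
          using line_hull[OF lines[OF lfL[OF F(1)]] Flf[OF F(1)] d1[OF F(1)]] .
        have "y \<in> rel_interior F" using subset_rel_interior[OF GF] h1 h2 G(2) by blast
        then show ?thesis using yG yq F(1) unfolding C_def by blast
      qed
    qed
  qed
  have "card (C W) \<le> card (C V - {q})" using CW finC by (intro card_mono) auto
  also have "\<dots> < card (C V)" using qC finC by (meson card_Diff1_less)
  finally have "vertex_number \<L> W < k" using vn assms(5) by simp
  then show ?thesis using arrW cardW eSW by blast
qed

end
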